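(* Let $\Sigma_g$ be a closed oriented surface of genus $g\ge2$ and $\tau$ a graph on $\Sigma_g$ (with any number of vertices) which lifts to a triangulation of the universal cover, with edge set $E$. Then the inclusion map of the cross ratio parameter space $\mathcal{C}_\tau$ into $\mathbb{R}^E$ is proper.
   Context: For $\mathbf{c}:E\to\mathbb{R}$ and a vertex $v$ of $\tau$ of valence $m$, list the edge-ends incident to $v$ in clockwise order as $e_1,\dots,e_m$ (an edge with both endpoints at $v$ contributes two entries), set $x_i=\mathbf{c}(e_i)$, $A_i=\begin{pmatrix}0&1\\-1&x_i\end{pmatrix}$, and $W_j=A_1\cdots A_j=\begin{pmatrix}a_j&b_j\\c_j&d_j\end{pmatrix}$. The conditions at $v$ are: (1) $W_m=-I$; (2) $a_j<0$, $c_j<0$, $b_j>0$, $d_j>0$ for $1\le j\le m-1$, except that $a_1=0$ and $d_{m-1}=0$ (no inequality imposed on these). The cross ratio parameter space is $\mathcal{C}_\tau=\{\mathbf{c}\in\mathbb{R}^E\mid \mathbf{c}\text{ satisfies (1) and (2) at every vertex}\}$. *)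

theory Defs
  imports "HOL-Analysis.Analysis"
begin

text \<open>Combinatorial model of a graph tau cellularly embedded in a closed oriented surface
  (a rotation system / ribbon graph).  Edges are the elements of a finite type 'e; every
  edge has two ends (darts) (e,True) and (e,False).  The permutation sigma sends a dart to
  the next dart clockwise around its vertex; vertices are the sigma-orbits, faces are the
  orbits of sigma o flip.\<close>

type_synonym 'e dart = "'e \<times> bool"

definition flip :: "'e dart \<Rightarrow> 'e dart" where
  "flip d = (fst d, \<not> snd d)"

definition orb :: "('a \<Rightarrow> 'a) \<Rightarrow> 'a \<Rightarrow> 'a set" where
  "orb f x = range (\<lambda>n. (f ^^ n) x)"

definition face_perm :: "('e dart \<Rightarrow> 'e dart) \<Rightarrow> 'e dart \<Rightarrow> 'e dart" where
  "face_perm \<sigma> = \<sigma> \<circ> flip"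

definition surface_graph_triangular :: "nat \<Rightarrow> ('e::finite dart \<Rightarrow> 'e dart) \<Rightarrow> bool" where
  "surface_graph_triangular g \<sigma> \<longleftrightarrow>
     bij \<sigma> \<and>
     (\<forall>d d'. (d, d') \<in> ({(x, \<sigma> x) | x. True} \<union> {(x, flip x) | x. True})\<^sup>*) \<and>
     (\<forall>d. card (orb (face_perm \<sigma>) d) = 3) \<and>
     int (card (range (orb \<sigma>))) - int CARD('e) + int (card (range (orb (face_perm \<sigma>))))
       = 2 - 2 * int g"

fun path_ok :: "('e dart \<Rightarrow> 'e dart) \<Rightarrow> 'e dart set \<Rightarrow> 'e dart list \<Rightarrow> 'e dart set \<Rightarrow> bool" where
  "path_ok \<sigma> v [] w \<longleftrightarrow> v = w"
| "path_ok \<sigma> v (d # ds) w \<longleftrightarrow> orb \<sigma> d = v \<and> path_ok \<sigma> (orb \<sigma> (flip d)) ds w"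

text \<open>Elementary homotopies: inserting a backtrack or the boundary of a (triangular) face.\<close>
inductive hstep :: "('e dart \<Rightarrow> 'e dart) \<Rightarrow> 'e dart list \<Rightarrow> 'e dart list \<Rightarrow> bool" for \<sigma> where
  backtrack: "hstep \<sigma> (xs @ ys) (xs @ [d, flip d] @ ys)"
| face: "hstep \<sigma> (xs @ ys) (xs @ [d, face_perm \<sigma> d, face_perm \<sigma> (face_perm \<sigma> d)] @ ys)"

definition homotopic_paths_rel ::
  "('e dart \<Rightarrow> 'e dart) \<Rightarrow> 'e dart set \<Rightarrow> 'e dart set \<Rightarrow> 'e dart list \<Rightarrow> 'e dart list \<Rightarrow> bool" where
  "homotopic_paths_rel \<sigma> v w p q \<longleftrightarrow>
     (p, q) \<in> {(a, b). (hstep \<sigma> a b \<or> hstep \<sigma> b a) \<and> path_ok \<sigma> v a w \<and> path_ok \<sigma> v b w}\<^sup>*"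

definition nullhomotopic :: "('e dart \<Rightarrow> 'e dart) \<Rightarrow> 'e dart set \<Rightarrow> 'e dart list \<Rightarrow> bool" where
  "nullhomotopic \<sigma> v p \<longleftrightarrow> path_ok \<sigma> v p v \<and> homotopic_paths_rel \<sigma> v v p []"

text \<open>The lift of tau to the universal cover is a (simplicial) triangulation: no lifted edge
  is a loop and no two distinct lifted edges join the same pair of vertices.\<close>
definition lifts_to_triangulation :: "('e dart \<Rightarrow> 'e dart) \<Rightarrow> bool" where
  "lifts_to_triangulation \<sigma> \<longleftrightarrow>
     (\<forall>d. \<not> nullhomotopic \<sigma> (orb \<sigma> d) [d]) \<and>
     (\<forall>d1 d2. d2 \<noteq> flip d1 \<longrightarrow> \<not> nullhomotopic \<sigma> (orb \<sigma> d1) [d1, d2])"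

definition Amat :: "real \<Rightarrow> real^2^2" where
  "Amat x = vector [vector [0, 1], vector [-1, x]]"

fun Wprod :: "(nat \<Rightarrow> real) \<Rightarrow> nat \<Rightarrow> real^2^2" where
  "Wprod x 0 = mat 1"
| "Wprod x (Suc j) = Wprod x j ** Amat (x (Suc j))"

text \<open>Conditions (1),(2) at the vertex of d0, listing edge-ends clockwise starting at d0:
  e_i = sigma^(i-1) d0, x_i = c(e_i), m = valence.\<close>
definition vertex_conditions :: "('e dart \<Rightarrow> 'e dart) \<Rightarrow> ('e \<Rightarrow> real) \<Rightarrow> 'e dart \<Rightarrow> bool" where
  "vertex_conditions \<sigma> c d0 \<longleftrightarrow>
     (let m = card (orb \<sigma> d0);
          x = (\<lambda>i. c (fst ((\<sigma> ^^ (i - 1)) d0)));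
          W = Wprod x
      in W m = - mat 1 \<and>
         (\<forall>j\<in>{1..m - 1}.
            (j \<noteq> 1 \<longrightarrow> W j $ 1 $ 1 < 0) \<and> W j $ 2 $ 1 < 0 \<and>
            W j $ 1 $ 2 > 0 \<and> (j \<noteq> m - 1 \<longrightarrow> W j $ 2 $ 2 > 0)))"

definition cross_ratio_space :: "('e dart \<Rightarrow> 'e dart) \<Rightarrow> ('e \<Rightarrow> real) set" where
  "cross_ratio_space \<sigma> = {c. \<forall>d0. vertex_conditions \<sigma> c d0}"

end

theory Submission
  imports Defs
begin

lemma Amat_entries [simp]:
  "Amat x $ 1 $ 1 = 0" "Amat x $ 1 $ 2 = 1" "Amat x $ 2 $ 1 = -1" "Amat x $ 2 $ 2 = x"
  by (simp_all add: Amat_def)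

lemma Wprod_Suc_entries:
  "Wprod x (Suc j) $ 1 $ 1 = - Wprod x j $ 1 $ 2"
  "Wprod x (Suc j) $ 1 $ 2 = Wprod x j $ 1 $ 1 + Wprod x j $ 1 $ 2 * x (Suc j)"
  "Wprod x (Suc j) $ 2 $ 1 = - Wprod x j $ 2 $ 2"
  "Wprod x (Suc j) $ 2 $ 2 = Wprod x j $ 2 $ 1 + Wprod x j $ 2 $ 2 * x (Suc j)"
  by (simp_all add: matrix_matrix_mult_def sum_2)

lemma Wprod_det:
  "Wprod x j $ 1 $ 1 * Wprod x j $ 2 $ 2 - Wprod x j $ 1 $ 2 * Wprod x j $ 2 $ 1 = 1"
proof (induction j)
  case 0
  then show ?case by (simp add: mat_def)
next
  case (Suc j)
  then show ?case unfolding Wprod_Suc_entries by (simp add: algebra_simps)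
qed

lemma Wprod_1:
  "Wprod x 1 $ 1 $ 2 = 1" "Wprod x 1 $ 2 $ 1 = -1"
  using Wprod_Suc_entries[of x 0] by (simp_all add: mat_def)

definition vc_closed :: "('e dart \<Rightarrow> 'e dart) \<Rightarrow> ('e \<Rightarrow> real) \<Rightarrow> 'e dart \<Rightarrow> bool" where
  "vc_closed \<sigma> c d0 \<longleftrightarrow>
     (let m = card (orb \<sigma> d0);
          x = (\<lambda>i. c (fst ((\<sigma> ^^ (i - 1)) d0)));
          W = Wprod x
      in W m = - mat 1 \<and>
         (\<forall>j\<in>{1..m - 1}.
            (j \<noteq> 1 \<longrightarrow> W j $ 1 $ 1 \<le> 0) \<and> W j $ 2 $ 1 \<le> 0 \<and>
            W j $ 1 $ 2 \<ge> 0 \<and> (j \<noteq> m - 1 \<longrightarrow> W j $ 2 $ 2 \<ge> 0)))"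

lemma strict_from_closed:
  fixes x :: "nat \<Rightarrow> real" and m :: nat
  defines "W \<equiv> Wprod x"
  assumes Wm: "W m = - mat 1"
    and H: "\<forall>j\<in>{1..m - 1}.
            (j \<noteq> 1 \<longrightarrow> W j $ 1 $ 1 \<le> 0) \<and> W j $ 2 $ 1 \<le> 0 \<and>
            W j $ 1 $ 2 \<ge> 0 \<and> (j \<noteq> m - 1 \<longrightarrow> W j $ 2 $ 2 \<ge> 0)"
  shows "\<forall>j\<in>{1..m - 1}.
            (j \<noteq> 1 \<longrightarrow> W j $ 1 $ 1 < 0) \<and> W j $ 2 $ 1 < 0 \<and>
            W j $ 1 $ 2 > 0 \<and> (j \<noteq> m - 1 \<longrightarrow> W j $ 2 $ 2 > 0)"
proof -
  have det: "W j $ 1 $ 1 * W j $ 2 $ 2 - W j $ 1 $ 2 * W j $ 2 $ 1 = 1" for j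
    unfolding W_def by (rule Wprod_det)
  have m21: "W m $ 2 $ 1 = 0" using Wm by (simp add: mat_def)
  have last22: "W (m - 1) $ 2 $ 2 = 0" if "m \<ge> 1"
  proof -
    have "W m $ 2 $ 1 = - W (m - 1) $ 2 $ 2"
    proof -
      have mm: "Suc (m - 1) = m" using that by simp
      show ?thesis using Wprod_Suc_entries(3)[of x "m - 1", unfolded mm] unfolding W_def .
    qed
    then show ?thesis using m21 by simp
  qed
  have HJ: "(j \<noteq> 1 \<longrightarrow> W j $ 1 $ 1 \<le> 0) \<and> W j $ 2 $ 1 \<le> 0 \<and>
            W j $ 1 $ 2 \<ge> 0 \<and> (j \<noteq> m - 1 \<longrightarrow> W j $ 2 $ 2 \<ge> 0)"
    if "j \<in> {1..m - 1}" for j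
    using H that by (rule bspec)
  have nn22: "W j $ 2 $ 2 \<ge> 0" if j: "j \<in> {1..m - 1}" for j
  proof (cases "j = m - 1")
    case True
    have "m \<ge> 1" using j by (cases m) auto
    then show ?thesis using last22 True by simp
  next
    case False then show ?thesis using HJ[OF j] by blast
  qed
  have prod: "W j $ 1 $ 1 * W j $ 2 $ 2 \<le> 0" if j: "j \<in> {1..m - 1}" "j \<noteq> 1" for j
  proof -
    have "W j $ 1 $ 1 \<le> 0" using HJ[OF j(1)] j(2) by blast
    then show ?thesis using nn22[OF j(1)] by (simp add: mult_nonpos_nonneg)
  qed
  have B: "W j $ 1 $ 2 > 0" if j: "j \<in> {1..m - 1}" for j
  proof (cases "j = 1")
    case True then show ?thesis unfolding W_def using Wprod_1 by simp
  next
    case False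
    have ge: "W j $ 1 $ 2 \<ge> 0" using HJ[OF j] by blast
    show ?thesis
    proof (rule ccontr)
      assume "\<not> ?thesis"
      then have z: "W j $ 1 $ 2 = 0" using ge by linarith
      show False using det[of j] z prod[OF j False] by simp
    qed
  qed
  have C: "W j $ 2 $ 1 < 0" if j: "j \<in> {1..m - 1}" for j
  proof (cases "j = 1")
    case True then show ?thesis unfolding W_def using Wprod_1 by simp
  next
    case False
    have le: "W j $ 2 $ 1 \<le> 0" using HJ[OF j] by blast
    show ?thesis
    proof (rule ccontr)
      assume "\<not> ?thesis"
      then have z: "W j $ 2 $ 1 = 0" using le by linarith
      show False using det[of j] z prod[OF j False] by simp
    qed
  qed
  show ?thesis
  proof
    fix j assume j: "j \<in> {1..m - 1}"
    have A: "W j $ 1 $ 1 < 0" if "j \<noteq> 1"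
    proof -
      have "W j $ 1 $ 1 = - W (j - 1) $ 1 $ 2"
      proof -
        have jj: "Suc (j - 1) = j" using j by simp
        show ?thesis using Wprod_Suc_entries(1)[of x "j - 1", unfolded jj] unfolding W_def .
      qed
      moreover have "W (j - 1) $ 1 $ 2 > 0" proof -
        have "1 \<le> j - 1" "j - 1 \<le> m - 1" using j that by auto
        then show ?thesis using B[of "j - 1"] by simp
      qed
      ultimately show ?thesis by simp
    qed
    have D: "W j $ 2 $ 2 > 0" if "j \<noteq> m - 1"
    proof -
      have "W (Suc j) $ 2 $ 1 = - W j $ 2 $ 2"
        using Wprod_Suc_entries(3)[of x j] unfolding W_def .
      moreover have "W (Suc j) $ 2 $ 1 < 0" using C[of "Suc j"] j that by auto
      ultimately show ?thesis by simp
    qed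
    show "(j \<noteq> 1 \<longrightarrow> W j $ 1 $ 1 < 0) \<and> W j $ 2 $ 1 < 0 \<and>
            W j $ 1 $ 2 > 0 \<and> (j \<noteq> m - 1 \<longrightarrow> W j $ 2 $ 2 > 0)"
      using A B[OF j] C[OF j] D by blast
  qed
qed

lemma weaken_ineqs:
  fixes a b c d :: "nat \<Rightarrow> real"
  assumes "\<forall>j\<in>S. (P j \<longrightarrow> a j < 0) \<and> b j < 0 \<and> c j > 0 \<and> (Q j \<longrightarrow> d j > 0)"
  shows "\<forall>j\<in>S. (P j \<longrightarrow> a j \<le> 0) \<and> b j \<le> 0 \<and> c j \<ge> 0 \<and> (Q j \<longrightarrow> d j \<ge> 0)"
  using assms by (meson less_imp_le)

lemma vc_eq: "vertex_conditions \<sigma> c d0 \<longleftrightarrow> vc_closed \<sigma> c d0"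
  unfolding vertex_conditions_def vc_closed_def Let_def
  apply (rule iffI)
   apply (erule conjE, rule conjI, assumption, erule weaken_ineqs)
  apply (erule conjE, rule conjI, assumption)
  apply (rule strict_from_closed, assumption+)
  done

lemma Wprod_cont:
  fixes X :: "('e \<Rightarrow> real) \<Rightarrow> nat \<Rightarrow> real"
  assumes "\<And>i. continuous_on UNIV (\<lambda>c. X c i)"
  shows "\<forall>a b. continuous_on UNIV (\<lambda>c. Wprod (X c) j $ a $ b)"
proof (induction j)
  case 0
  then show ?case by (simp add: mat_def)
next
  case (Suc j)
  note IH = Suc[rule_format]
  show ?case
    unfolding forall_2 Wprod_Suc_entries
    by (intro conjI continuous_intros IH assms)
qed

lemma closed_vc: "closed {c :: 'e::finite \<Rightarrow> real. vc_closed \<sigma> c d0}"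
proof -
  define m where "m = card (orb \<sigma> d0)"
  define X where "X = (\<lambda>(c::'e \<Rightarrow> real) i. c (fst ((\<sigma> ^^ (i - 1)) d0)))"
  have Xc: "continuous_on UNIV (\<lambda>c. X c i)" for i
    unfolding X_def by simp
  note WC = Wprod_cont[OF Xc, rule_format]
  have eq: "{c. vc_closed \<sigma> c d0} =
     {c. \<forall>a b. Wprod (X c) m $ a $ b = (- mat 1 :: real^2^2) $ a $ b} \<inter>
     (\<Inter>j\<in>{1..m - 1}.
        {c. j \<noteq> 1 \<longrightarrow> Wprod (X c) j $ 1 $ 1 \<le> 0} \<inter> {c. Wprod (X c) j $ 2 $ 1 \<le> 0} \<inter>
        {c. Wprod (X c) j $ 1 $ 2 \<ge> 0} \<inter> {c. j \<noteq> m - 1 \<longrightarrow> Wprod (X c) j $ 2 $ 2 \<ge> 0})"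
    unfolding vc_closed_def Let_def m_def[symmetric] X_def
    by (auto simp: vec_eq_iff)
  have c1: "closed {c. \<forall>a b. Wprod (X c) m $ a $ b = (- mat 1 :: real^2^2) $ a $ b}"
    unfolding Collect_all_eq
    by (intro closed_INT ballI closed_Collect_eq continuous_intros WC)
  have c2: "closed {c. j \<noteq> 1 \<longrightarrow> Wprod (X c) j $ 1 $ 1 \<le> 0}" for j
    by (cases "j = 1") (auto intro!: closed_Collect_le continuous_intros WC)
  have c3: "closed {c. j \<noteq> m - 1 \<longrightarrow> Wprod (X c) j $ 2 $ 2 \<ge> 0}" for j
    by (cases "j = m - 1") (auto intro!: closed_Collect_le continuous_intros WC)
  show ?thesis unfolding eq
    by (intro closed_Int c1 closed_INT ballI c2 c3 closed_Collect_le continuous_intros WC)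
qed

lemma closed_crs: "closed (cross_ratio_space (\<sigma> :: 'e::finite dart \<Rightarrow> 'e dart))"
proof -
  have "cross_ratio_space \<sigma> = (\<Inter>d0. {c. vc_closed \<sigma> c d0})"
    unfolding cross_ratio_space_def by (auto simp: vc_eq)
  then show ?thesis by (simp add: closed_INT closed_vc)
qed

theorem lemma3p2:
  fixes g :: nat and \<sigma> :: "'e::finite dart \<Rightarrow> 'e dart"
  assumes "g \<ge> 2"
    and "surface_graph_triangular g \<sigma>"
    and "lifts_to_triangulation \<sigma>"
  shows "proper_map (subtopology euclidean (cross_ratio_space \<sigma>)) euclidean (\<lambda>c. c)"
proof -
  have cl: "closedin euclidean (cross_ratio_space \<sigma>)"
    using closed_crs[of \<sigma>] closed_closedin by blast
  have "proper_map (subtopology euclidean (cross_ratio_space \<sigma>)) euclidean id"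
    apply (subst proper_map_inclusion)
     apply simp
    apply (rule conjI)
     apply (rule cl)
    apply (intro allI impI)
    apply (erule closed_Int_compactin[OF cl])
    done
  then show ?thesis by (simp add: id_def)
qed

end
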